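(* Let $B$ and $W$ be independent standard real-valued Brownian motions. Then $$\frac{1}{4\pi^2}\int_{[0,1]^4}\int_{\mathbb{R}^2} p_1^2 p_2^2\, \mathbb{E}\!\left[e^{ip_1(B_{t_1}-W_{s_1}) + ip_2(B_{t_2}-W_{s_2})}\right] dp_1\,dp_2\,ds_1\,ds_2\,dt_1\,dt_2 = +\infty .$$ (The integrand is nonnegative, so the integral is well defined in $[0,\infty]$.) In particular, the second-order derivative intersection local time $L_{2,1,1} = \frac{i^2}{2\pi}\int_0^1\int_0^1\int_{\mathbb{R}} p^2 e^{ip(B_t - W_s)}\,dp\,ds\,dt$ of $B$ and $W$ (the case $d=1$, $k=2$, $T=1$, $H_1=H_2=\tfrac12$) does not have a finite second moment.
   Context: This serves as a counterexample to a claimed result that, for independent fractional Brownian motions with Hurst parameters $H_1,H_2$ and $\frac{H_1H_2}{H_1+H_2}(|k|+d)<1$, the $k$-th order derivative intersection local time exists in every $L^p$ and is exponentially integrable; with $d=1$, $k=2$, $H_1=H_2=\tfrac12$ this condition holds. The displayed integral is the formal expression for $\mathbb{E}[L_{2,1,1}^2]$. *)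

theory Defs
  imports "HOL-Probability.Probability"
begin

text \<open>A standard real-valued Brownian motion on the probability space M, indexed by
  times t \<ge> 0 (values at negative times are irrelevant).\<close>
definition std_BM :: "'a measure \<Rightarrow> (real \<Rightarrow> 'a \<Rightarrow> real) \<Rightarrow> bool" where
  "std_BM M B \<longleftrightarrow>
     prob_space M \<and>
     (\<forall>t. B t \<in> borel_measurable M) \<and>
     (\<forall>\<omega>\<in>space M. B 0 \<omega> = 0) \<and>
     (\<forall>s t. 0 \<le> s \<longrightarrow> s < t \<longrightarrow>
        distributed M lborel (\<lambda>\<omega>. B t \<omega> - B s \<omega>) (normal_density 0 (sqrt (t - s)))) \<and>
     (\<forall>(n::nat) (\<tau>::nat \<Rightarrow> real). 0 \<le> \<tau> 0 \<longrightarrow> (\<forall>i<n. \<tau> i < \<tau> (Suc i)) \<longrightarrow>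
        prob_space.indep_vars M (\<lambda>_. borel) (\<lambda>i \<omega>. B (\<tau> (Suc i)) \<omega> - B (\<tau> i) \<omega>) {..<n}) \<and>
     (AE \<omega> in M. continuous_on {0..} (\<lambda>t. B t \<omega>))"

end

theory Submission
  imports Defs
begin


lemma bm_incr_char:
  assumes "std_BM M B" "0 \<le> s" "s < t"
  shows "prob_space.expectation M (\<lambda>\<omega>. iexp (c * (B t \<omega> - B s \<omega>))) = complex_of_real (exp (-(c\<^sup>2 * (t-s))/2))"
proof -
  interpret prob_space M using assms(1) unfolding std_BM_def by auto
  define \<sigma> where "\<sigma> = sqrt (t - s)"
  have sp: "\<sigma> > 0" using assms unfolding \<sigma>_def by auto
  have d: "distributed M lborel (\<lambda>\<omega>. B t \<omega> - B s \<omega>) (normal_density 0 \<sigma>)"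
    using assms unfolding std_BM_def \<sigma>_def by auto
  define Z where "Z = (\<lambda>\<omega>. ((B t \<omega> - B s \<omega>) - 0) / \<sigma>)"
  have dz: "distributed M lborel Z std_normal_density"
    using normal_standard_normal_convert[OF sp] d unfolding Z_def by auto
  have Zm: "Z \<in> measurable M lborel" and Zd: "distr M lborel Z = std_normal_distribution"
    using dz unfolding distributed_def by auto
  have "char std_normal_distribution (c * \<sigma>) = (CLINT x|distr M lborel Z. iexp ((c * \<sigma>) * x))"
    by (simp add: char_def Zd)
  also have "\<dots> = (CLINT \<omega>|M. iexp ((c * \<sigma>) * Z \<omega>))"
    by (rule integral_distr[OF Zm]) simp
  also have "\<dots> = (CLINT \<omega>|M. iexp (c * (B t \<omega> - B s \<omega>)))"
    using sp unfolding Z_def by simp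
  finally have "(CLINT \<omega>|M. iexp (c * (B t \<omega> - B s \<omega>))) = complex_of_real (exp (- ((c * \<sigma>)^2) / 2))"
    by (simp add: char_std_normal_distribution)
  also have "(c * \<sigma>)^2 = c\<^sup>2 * (t - s)" using assms unfolding \<sigma>_def by (simp add: power_mult_distrib)
  finally show ?thesis by simp
qed

lemma bm_two:
  assumes "std_BM M B" "0 < t1" "t1 < t2"
  shows "prob_space.expectation M (\<lambda>\<omega>. iexp (a * B t1 \<omega> + b * B t2 \<omega>))
     = complex_of_real (exp (-((a+b)\<^sup>2 * t1)/2) * exp (-(b\<^sup>2 * (t2-t1))/2))"
proof -
  interpret prob_space M using assms(1) unfolding std_BM_def by auto
  define \<tau> :: "nat \<Rightarrow> real" where "\<tau> = (\<lambda>i. if i = 0 then 0 else if i = 1 then t1 else t2)"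
  define k :: "nat \<Rightarrow> real" where "k = (\<lambda>i. if i = 0 then a + b else b)"
  have ind: "indep_vars (\<lambda>_. borel) (\<lambda>i \<omega>. B (\<tau> (Suc i)) \<omega> - B (\<tau> i) \<omega>) {..<2}"
    using assms unfolding std_BM_def
    apply (elim conjE)
    apply (drule spec[where x=2], drule spec[where x=\<tau>])
    using assms by (auto simp: \<tau>_def less_Suc_eq numeral_2_eq_2)
  have ind2: "indep_vars (\<lambda>_. borel) (\<lambda>i \<omega>. iexp (k i * (B (\<tau> (Suc i)) \<omega> - B (\<tau> i) \<omega>))) {..<2}"
    by (rule indep_vars_compose2[OF ind]) measurable
  have rv: "\<And>t. B t \<in> borel_measurable M" using assms(1) unfolding std_BM_def by auto
  have "(CLINT \<omega>|M. (\<Prod>i\<in>{..<2}. iexp (k i * (B (\<tau> (Suc i)) \<omega> - B (\<tau> i) \<omega>))))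
      = (\<Prod>i\<in>{..<2}. CLINT \<omega>|M. iexp (k i * (B (\<tau> (Suc i)) \<omega> - B (\<tau> i) \<omega>)))"
    apply (rule indep_vars_lebesgue_integral[OF _ ind2])
     apply simp
    apply (rule integrable_iexp)
    using rv by (auto intro!: borel_measurable_of_real borel_measurable_diff borel_measurable_times)
  also have "\<dots> = (\<Prod>i\<in>{..<2}. complex_of_real (exp (-((k i)\<^sup>2 * (\<tau> (Suc i) - \<tau> i))/2)))"
    apply (rule prod.cong[OF refl])
    apply (rule bm_incr_char[OF assms(1)])
    using assms by (auto simp: \<tau>_def)
  also have "\<dots> = complex_of_real (exp (-((a+b)\<^sup>2 * t1)/2) * exp (-(b\<^sup>2 * (t2-t1))/2))"
    using assms by (simp add: numeral_2_eq_2 \<tau>_def k_def)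
  also have "(CLINT \<omega>|M. (\<Prod>i\<in>{..<2}. iexp (k i * (B (\<tau> (Suc i)) \<omega> - B (\<tau> i) \<omega>))))
      = (CLINT \<omega>|M. iexp (a * B t1 \<omega> + b * B t2 \<omega>))"
  proof -
    have eq: "\<And>\<omega>. \<omega> \<in> space M \<Longrightarrow> (\<Prod>i\<in>{..<2}. iexp (k i * (B (\<tau> (Suc i)) \<omega> - B (\<tau> i) \<omega>))) = iexp (a * B t1 \<omega> + b * B t2 \<omega>)"
    proof -
      fix \<omega> assume "\<omega> \<in> space M"
      then have "B 0 \<omega> = 0" using assms(1) unfolding std_BM_def by auto
      then show "(\<Prod>i\<in>{..<2}. iexp (k i * (B (\<tau> (Suc i)) \<omega> - B (\<tau> i) \<omega>))) = iexp (a * B t1 \<omega> + b * B t2 \<omega>)"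
        by (simp add: numeral_2_eq_2 \<tau>_def k_def exp_add[symmetric] algebra_simps)
    qed
    show ?thesis by (rule Bochner_Integration.integral_cong[OF refl]) (rule eq)
  qed
  finally show ?thesis .
qed

lemma bm_expect:
  assumes B: "std_BM M B" and W: "std_BM M W"
    and ind: "prob_space.indep_var M (Pi\<^sub>M UNIV (\<lambda>_. borel)) (\<lambda>\<omega> t. B t \<omega>)
                                (Pi\<^sub>M UNIV (\<lambda>_. borel)) (\<lambda>\<omega> s. W s \<omega>)"
    and t: "0 < t1" "t1 < t2" and s: "0 < s1" "s1 < s2"
  shows "prob_space.expectation M (\<lambda>\<omega>. exp (\<i> * complex_of_real
                 (p1 * (B t1 \<omega> - W s1 \<omega>) + p2 * (B t2 \<omega> - W s2 \<omega>))))
    = complex_of_real (exp (-((p1+p2)\<^sup>2 * t1)/2) * exp (-(p2\<^sup>2 * (t2-t1))/2) *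
        (exp (-((-p1+(-p2))\<^sup>2 * s1)/2) * exp (-((-p2)\<^sup>2 * (s2-s1))/2)))"
proof -
  interpret prob_space M using assms(1) unfolding std_BM_def by auto
  define g1 where "g1 = (\<lambda>f::real\<Rightarrow>real. iexp (p1 * f t1 + p2 * f t2))"
  define g2 where "g2 = (\<lambda>f::real\<Rightarrow>real. iexp ((-p1) * f s1 + (-p2) * f s2))"
  have m1: "g1 \<in> borel_measurable (Pi\<^sub>M UNIV (\<lambda>_. borel))" unfolding g1_def by measurable
  have m2: "g2 \<in> borel_measurable (Pi\<^sub>M UNIV (\<lambda>_. borel))" unfolding g2_def by measurable
  have ind2: "indep_var borel (g1 \<circ> (\<lambda>\<omega> t. B t \<omega>)) borel (g2 \<circ> (\<lambda>\<omega> s. W s \<omega>))"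
    by (rule indep_var_compose[OF ind m1 m2])
  have rvB: "\<And>t. B t \<in> borel_measurable M" using B unfolding std_BM_def by auto
  have rvW: "\<And>t. W t \<in> borel_measurable M" using W unfolding std_BM_def by auto
  have int1: "integrable M (\<lambda>\<omega>. iexp (p1 * B t1 \<omega> + p2 * B t2 \<omega>))"
    by (rule integrable_iexp) (use rvB in auto)
  have int2: "integrable M (\<lambda>\<omega>. iexp ((-p1) * W s1 \<omega> + (-p2) * W s2 \<omega>))"
    by (rule integrable_iexp) (use rvW in auto)
  have "prob_space.expectation M (\<lambda>\<omega>. exp (\<i> * complex_of_real
                 (p1 * (B t1 \<omega> - W s1 \<omega>) + p2 * (B t2 \<omega> - W s2 \<omega>))))
     = expectation (\<lambda>\<omega>. iexp (p1 * B t1 \<omega> + p2 * B t2 \<omega>) * iexp ((-p1) * W s1 \<omega> + (-p2) * W s2 \<omega>))"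
    by (simp add: exp_add[symmetric] algebra_simps)
  also have "\<dots> = expectation (\<lambda>\<omega>. iexp (p1 * B t1 \<omega> + p2 * B t2 \<omega>)) * expectation (\<lambda>\<omega>. iexp ((-p1) * W s1 \<omega> + (-p2) * W s2 \<omega>))"
    using indep_var_lebesgue_integral[OF ind2] int1 int2 by (simp add: g1_def g2_def o_def)
  also have "\<dots> = complex_of_real (exp (-((p1+p2)\<^sup>2 * t1)/2) * exp (-(p2\<^sup>2 * (t2-t1))/2) *
        (exp (-((-p1+(-p2))\<^sup>2 * s1)/2) * exp (-((-p2)\<^sup>2 * (s2-s1))/2)))"
    unfolding bm_two[OF B t] bm_two[OF W s] by (simp only: of_real_mult)
  finally show ?thesis .
qed



lemma unbounded_inf:
  fixes X :: ennreal
  assumes k: "k > 0" and h: "\<And>\<epsilon>. 0 < \<epsilon> \<Longrightarrow> \<epsilon> \<le> 1/2 \<Longrightarrow> ennreal (k / sqrt (2*\<epsilon>)) \<le> X"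
  shows "X = \<infinity>"
proof (rule ccontr)
  assume "X \<noteq> \<infinity>"
  then obtain r where r: "X = ennreal r" "r \<ge> 0" by (cases X) auto
  define \<epsilon> where "\<epsilon> = min (1/2) ((k/(r+1))\<^sup>2/2)"
  have e0: "\<epsilon> > 0" using k r unfolding \<epsilon>_def by auto
  have e1: "\<epsilon> \<le> 1/2" unfolding \<epsilon>_def by auto
  have "2*\<epsilon> \<le> (k/(r+1))\<^sup>2" unfolding \<epsilon>_def by auto
  then have "sqrt (2*\<epsilon>) \<le> k/(r+1)" using k r by (metis abs_of_nonneg real_sqrt_abs real_sqrt_le_iff divide_nonneg_nonneg less_imp_le add_nonneg_pos zero_less_one)
  then have "r + 1 \<le> k / sqrt (2*\<epsilon>)" using e0 k r
    by (simp add: field_simps)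
  then have "ennreal (r+1) \<le> X" using h[OF e0 e1] by (meson ennreal_leI order_trans)
  then show False using r by (simp add: ennreal_le_iff)
qed

lemma pointwise_p:
  fixes a b p1 p2 :: real
  assumes a: "0 \<le> a" "a \<le> 2" and b: "0 < b" "b \<le> 1"
    and p1: "-2 / sqrt b \<le> p1" "p1 \<le> -1 / sqrt b"
    and p2: "-p1 - 1/2 \<le> p2" "p2 \<le> -p1 + 1/2"
  shows "exp (-5) / (16 * pi\<^sup>2) / b\<^sup>2 \<le> 1 / (4 * pi\<^sup>2) * (p1\<^sup>2 * p2\<^sup>2 * exp (- ((p1+p2)\<^sup>2 * a) / 2 - p2\<^sup>2 * b / 2))"
proof -
  define L where "L = 1 / sqrt b"
  have sb: "sqrt b > 0" "sqrt b \<le> 1" using b by auto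
  have L1: "L \<ge> 1" unfolding L_def using sb by (simp add: field_simps)
  have LL: "L\<^sup>2 = 1 / b" unfolding L_def using b by (simp add: power_divide)
  have p1': "-2 * L \<le> p1" "p1 \<le> - L" using p1 unfolding L_def by auto
  have q1: "p1\<^sup>2 \<ge> L\<^sup>2"
  proof -
    have "L\<^sup>2 \<le> (-p1)\<^sup>2" using p1' L1 by (intro power_mono) auto
    then show ?thesis by simp
  qed
  have p2l: "p2 \<ge> L / 2" using p1' p2 L1 by linarith
  have p2u: "p2 \<le> 3 * L" using p1' p2 L1 by linarith
  have q2: "p2\<^sup>2 \<ge> L\<^sup>2 / 4"
  proof -
    have "(L/2)\<^sup>2 \<le> p2\<^sup>2" using p2l L1 by (intro power_mono) auto
    then show ?thesis by (simp add: power_divide)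
  qed
  have q3: "p2\<^sup>2 \<le> 9 * L\<^sup>2"
  proof -
    have "p2\<^sup>2 \<le> (3*L)\<^sup>2" using p2l p2u L1 by (intro power_mono) auto
    then show ?thesis by (simp add: power_mult_distrib)
  qed
  have q4: "(p1+p2)\<^sup>2 \<le> 1/4"
  proof -
    have "\<bar>p1+p2\<bar> \<le> 1/2" using p2 by linarith
    then have "\<bar>p1+p2\<bar>\<^sup>2 \<le> (1/2)\<^sup>2" by (intro power_mono) auto
    then show ?thesis by (simp add: power2_eq_square)
  qed
  have e1: "(p1+p2)\<^sup>2 * a \<le> 1/2"
  proof -
    have "(p1+p2)\<^sup>2 * a \<le> 1/4 * 2" using q4 a by (intro mult_mono) auto
    then show ?thesis by simp
  qed
  have e2: "p2\<^sup>2 * b \<le> 9" using q3 LL b by (simp add: field_simps)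
  have ex: "exp (-5) \<le> exp (- ((p1+p2)\<^sup>2 * a) / 2 - p2\<^sup>2 * b / 2)" using e1 e2 by simp
  have pp: "1 / (4 * b\<^sup>2) \<le> p1\<^sup>2 * p2\<^sup>2"
  proof -
    have "L\<^sup>2 * (L\<^sup>2/4) \<le> p1\<^sup>2 * p2\<^sup>2" using q1 q2 by (intro mult_mono) auto
    moreover have "L\<^sup>2 * (L\<^sup>2/4) = 1 / (4 * b\<^sup>2)" unfolding LL using b by (simp add: power2_eq_square)
    ultimately show ?thesis by simp
  qed
  have "1 / (4 * b\<^sup>2) * exp (-5) \<le> p1\<^sup>2 * p2\<^sup>2 * exp (- ((p1+p2)\<^sup>2 * a) / 2 - p2\<^sup>2 * b / 2)"
    using pp ex by (intro mult_mono) auto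
  then have "1 / (4 * pi\<^sup>2) * (1 / (4 * b\<^sup>2) * exp (-5)) \<le> 1 / (4 * pi\<^sup>2) * (p1\<^sup>2 * p2\<^sup>2 * exp (- ((p1+p2)\<^sup>2 * a) / 2 - p2\<^sup>2 * b / 2))"
    by (intro mult_left_mono) auto
  moreover have "1 / (4 * pi\<^sup>2) * (1 / (4 * b\<^sup>2) * exp (-5)) = exp (-5) / (16 * pi\<^sup>2) / b\<^sup>2"
    by (simp add: field_simps)
  ultimately show ?thesis by simp
qed

lemma pbound:
  fixes a b :: real and f :: "real \<Rightarrow> real \<Rightarrow> ennreal"
  assumes a: "0 \<le> a" "a \<le> 2" and b: "0 < b" "b \<le> 1"
    and f: "\<And>p1 p2. ennreal (1 / (4 * pi\<^sup>2) * (p1\<^sup>2 * p2\<^sup>2 * exp (- ((p1+p2)\<^sup>2 * a) / 2 - p2\<^sup>2 * b / 2))) \<le> f p1 p2"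
  shows "ennreal (exp (-5) / (16 * pi\<^sup>2) / (b\<^sup>2 * sqrt b)) \<le> (\<integral>\<^sup>+ p1. \<integral>\<^sup>+ p2. f p1 p2 \<partial>lborel \<partial>lborel)"
proof -
  define c where "c = exp (-5) / (16 * pi\<^sup>2) / b\<^sup>2"
  define L where "L = 1 / sqrt b"
  have L0: "L > 0" unfolding L_def using b by auto
  have inner: "ennreal c * indicator {-2*L..-L} p1 \<le> (\<integral>\<^sup>+ p2. f p1 p2 \<partial>lborel)" for p1
  proof -
    have "(\<integral>\<^sup>+ p2. (ennreal c * indicator {-2*L..-L} p1) * indicator {-p1-1/2..-p1+1/2} p2 \<partial>lborel)
        \<le> (\<integral>\<^sup>+ p2. f p1 p2 \<partial>lborel)"
    proof (rule nn_integral_mono)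
      fix p2
      show "(ennreal c * indicator {-2*L..-L} p1) * indicator {-p1-1/2..-p1+1/2} p2 \<le> f p1 p2"
      proof (cases "p1 \<in> {-2*L..-L} \<and> p2 \<in> {-p1-1/2..-p1+1/2}")
        case True
        then have "c \<le> 1 / (4 * pi\<^sup>2) * (p1\<^sup>2 * p2\<^sup>2 * exp (- ((p1+p2)\<^sup>2 * a) / 2 - p2\<^sup>2 * b / 2))"
          unfolding c_def using pointwise_p[OF a b, of p1 p2] by (auto simp: L_def)
        then have "ennreal c \<le> f p1 p2" using f[of p1 p2] by (meson ennreal_leI order_trans)
        then show ?thesis using True by simp
      next
        case False
        then show ?thesis by (auto split: split_indicator)
      qed
    qed
    also have "(\<integral>\<^sup>+ p2. (ennreal c * indicator {-2*L..-L} p1) * indicator {-p1-1/2..-p1+1/2} p2 \<partial>lborel)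
       = (ennreal c * indicator {-2*L..-L} p1) * emeasure lborel {-p1-1/2..-p1+1/2}"
      by (rule nn_integral_cmult_indicator) simp
    also have "emeasure lborel {-p1-1/2..-p1+1/2} = 1" by simp
    finally show ?thesis by simp
  qed
  have "(\<integral>\<^sup>+ p1. ennreal c * indicator {-2*L..-L} p1 \<partial>lborel) \<le> (\<integral>\<^sup>+ p1. \<integral>\<^sup>+ p2. f p1 p2 \<partial>lborel \<partial>lborel)"
    by (rule nn_integral_mono) (rule inner)
  also have "(\<integral>\<^sup>+ p1. ennreal c * indicator {-2*L..-L} p1 \<partial>lborel) = ennreal c * emeasure lborel {-2*L..-L}"
    by (rule nn_integral_cmult_indicator) simp
  also have "emeasure lborel {-2*L..-L} = ennreal L" using L0 by simp
  also have "ennreal c * ennreal L = ennreal (c * L)" by (rule ennreal_mult''[symmetric]) (use L0 in simp)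
  also have "c * L = exp (-5) / (16 * pi\<^sup>2) / (b\<^sup>2 * sqrt b)" unfolding c_def L_def by simp
  finally show ?thesis .
qed

lemma time_bound:
  fixes \<Phi> :: "real \<Rightarrow> real \<Rightarrow> real \<Rightarrow> real \<Rightarrow> ennreal" and C :: real
  assumes C: "C > 0"
    and h: "\<And>t1 t2 s1 s2. 0 < t1 \<Longrightarrow> t1 \<le> 1/2 \<Longrightarrow> t1 < t2 \<Longrightarrow> t2 \<le> t1 + 1/2 \<Longrightarrow>
             0 < s1 \<Longrightarrow> s1 \<le> 1/2 \<Longrightarrow> s1 < s2 \<Longrightarrow> s2 \<le> s1 + 1/2 \<Longrightarrow>
             ennreal (C / ((t2-t1+s2-s1)\<^sup>2 * sqrt (t2-t1+s2-s1))) \<le> \<Phi> t1 t2 s1 s2"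
  shows "(\<integral>\<^sup>+ t1. \<integral>\<^sup>+ t2. \<integral>\<^sup>+ s1. \<integral>\<^sup>+ s2. \<Phi> t1 t2 s1 s2 \<partial>lborel \<partial>lborel \<partial>lborel \<partial>lborel) = \<infinity>"
proof -
  have stepA: "ennreal (C / (4 * x * sqrt (2*x))) \<le> (\<integral>\<^sup>+ s2. \<Phi> t1 (t1+x) s1 s2 \<partial>lborel)"
    if t1: "0 < t1" "t1 \<le> 1/2" and x: "0 < x" "x \<le> 1/2" and s1: "0 < s1" "s1 \<le> 1/2" for t1 x s1
  proof -
    define k where "k = C / ((2*x)\<^sup>2 * sqrt (2*x))"
    have "(\<integral>\<^sup>+ s2. ennreal k * indicator {s1<..s1+x} s2 \<partial>lborel) \<le> (\<integral>\<^sup>+ s2. \<Phi> t1 (t1+x) s1 s2 \<partial>lborel)"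
    proof (rule nn_integral_mono)
      fix s2
      show "ennreal k * indicator {s1<..s1+x} s2 \<le> \<Phi> t1 (t1+x) s1 s2"
      proof (cases "s2 \<in> {s1<..s1+x}")
        case True
        define bb where "bb = t1 + x - t1 + s2 - s1"
        have bb: "0 < bb" "bb \<le> 2*x" using True x unfolding bb_def by auto
        have "bb\<^sup>2 * sqrt bb \<le> (2*x)\<^sup>2 * sqrt (2*x)"
          using bb by (intro mult_mono power_mono real_sqrt_le_mono) auto
        then have "k \<le> C / (bb\<^sup>2 * sqrt bb)" unfolding k_def
          using bb C by (intro divide_left_mono) auto
        then have "ennreal k \<le> \<Phi> t1 (t1+x) s1 s2"
          using h[of t1 "t1+x" s1 s2] True t1 x s1 unfolding bb_def
          by (meson ennreal_leI order_trans greaterThanAtMost_iff add_le_mono order_refl less_add_same_cancel1 add_le_cancel_left)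
        then show ?thesis using True by simp
      next
        case False
        then show ?thesis by simp
      qed
    qed
    also have "(\<integral>\<^sup>+ s2. ennreal k * indicator {s1<..s1+x} s2 \<partial>lborel) = ennreal k * emeasure lborel {s1<..s1+x}"
      by (rule nn_integral_cmult_indicator) simp
    also have "emeasure lborel {s1<..s1+x} = ennreal x" using x by simp
    also have "ennreal k * ennreal x = ennreal (k * x)" by (rule ennreal_mult''[symmetric]) (use x in simp)
    also have "k * x = C / (4 * x * sqrt (2*x))" unfolding k_def using x
      by (simp add: power2_eq_square field_simps)
    finally show ?thesis .
  qed
  have stepB: "ennreal (C / (8 * x * sqrt (2*x))) \<le> (\<integral>\<^sup>+ s1. \<integral>\<^sup>+ s2. \<Phi> t1 (t1+x) s1 s2 \<partial>lborel \<partial>lborel)"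
    if t1: "0 < t1" "t1 \<le> 1/2" and x: "0 < x" "x \<le> 1/2" for t1 x
  proof -
    have "(\<integral>\<^sup>+ s1. ennreal (C / (4 * x * sqrt (2*x))) * indicator {0<..1/2::real} s1 \<partial>lborel)
       \<le> (\<integral>\<^sup>+ s1. \<integral>\<^sup>+ s2. \<Phi> t1 (t1+x) s1 s2 \<partial>lborel \<partial>lborel)"
    proof (rule nn_integral_mono)
      fix s1
      show "ennreal (C / (4 * x * sqrt (2*x))) * indicator {0<..1/2::real} s1 \<le> (\<integral>\<^sup>+ s2. \<Phi> t1 (t1+x) s1 s2 \<partial>lborel)"
        using stepA[OF t1 x, of s1] by (cases "s1 \<in> {0<..1/2}") auto
    qed
    also have "(\<integral>\<^sup>+ s1. ennreal (C / (4 * x * sqrt (2*x))) * indicator {0<..1/2::real} s1 \<partial>lborel)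
        = ennreal (C / (4 * x * sqrt (2*x))) * emeasure lborel {0<..1/2::real}"
      by (rule nn_integral_cmult_indicator) simp
    also have "emeasure lborel {0<..1/2::real} = ennreal (1/2)" by simp
    also have "ennreal (C / (4 * x * sqrt (2*x))) * ennreal (1/2) = ennreal (C / (4 * x * sqrt (2*x)) * (1/2))"
      by (rule ennreal_mult''[symmetric]) simp
    also have "C / (4 * x * sqrt (2*x)) * (1/2) = C / (8 * x * sqrt (2*x))" by simp
    finally show ?thesis .
  qed
  have stepC: "(\<integral>\<^sup>+ t2. \<integral>\<^sup>+ s1. \<integral>\<^sup>+ s2. \<Phi> t1 t2 s1 s2 \<partial>lborel \<partial>lborel \<partial>lborel) = \<infinity>"
    if t1: "0 < t1" "t1 \<le> 1/2" for t1
  proof (rule unbounded_inf[of "C/8"])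
    show "0 < C/8" using C by simp
    fix \<epsilon> :: real assume e: "0 < \<epsilon>" "\<epsilon> \<le> 1/2"
    define k where "k = C / (8 * \<epsilon> * sqrt (2*\<epsilon>))"
    have "(\<integral>\<^sup>+ t2. ennreal k * indicator {t1<..t1+\<epsilon>} t2 \<partial>lborel) \<le> (\<integral>\<^sup>+ t2. \<integral>\<^sup>+ s1. \<integral>\<^sup>+ s2. \<Phi> t1 t2 s1 s2 \<partial>lborel \<partial>lborel \<partial>lborel)"
    proof (rule nn_integral_mono)
      fix t2
      show "ennreal k * indicator {t1<..t1+\<epsilon>} t2 \<le> (\<integral>\<^sup>+ s1. \<integral>\<^sup>+ s2. \<Phi> t1 t2 s1 s2 \<partial>lborel \<partial>lborel)"
      proof (cases "t2 \<in> {t1<..t1+\<epsilon>}")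
        case True
        define x where "x = t2 - t1"
        have x: "0 < x" "x \<le> \<epsilon>" using True unfolding x_def by auto
        have "8 * x * sqrt (2*x) \<le> 8 * \<epsilon> * sqrt (2*\<epsilon>)"
          using x by (intro mult_mono real_sqrt_le_mono) auto
        then have "k \<le> C / (8 * x * sqrt (2*x))" unfolding k_def
          using x C by (intro divide_left_mono) auto
        moreover have "ennreal (C / (8 * x * sqrt (2*x))) \<le> (\<integral>\<^sup>+ s1. \<integral>\<^sup>+ s2. \<Phi> t1 (t1+x) s1 s2 \<partial>lborel \<partial>lborel)"
          using stepB[OF t1, of x] x e by simp
        moreover have "t1 + x = t2" unfolding x_def by simp
        ultimately show ?thesis using True by (simp, meson ennreal_leI order_trans)
      next
        case False
        then show ?thesis by simp
      qed
    qed
    also have "(\<integral>\<^sup>+ t2. ennreal k * indicator {t1<..t1+\<epsilon>} t2 \<partial>lborel) = ennreal k * emeasure lborel {t1<..t1+\<epsilon>}"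
      by (rule nn_integral_cmult_indicator) simp
    also have "emeasure lborel {t1<..t1+\<epsilon>} = ennreal \<epsilon>" using e by simp
    also have "ennreal k * ennreal \<epsilon> = ennreal (k * \<epsilon>)" by (rule ennreal_mult''[symmetric]) (use e in simp)
    also have "k * \<epsilon> = C / 8 / sqrt (2*\<epsilon>)" unfolding k_def using e by simp
    finally show "ennreal (C / 8 / sqrt (2*\<epsilon>)) \<le> (\<integral>\<^sup>+ t2. \<integral>\<^sup>+ s1. \<integral>\<^sup>+ s2. \<Phi> t1 t2 s1 s2 \<partial>lborel \<partial>lborel \<partial>lborel)" .
  qed
  have "(\<integral>\<^sup>+ t1. \<infinity> * indicator {0<..1/2::real} t1 \<partial>lborel) \<le> (\<integral>\<^sup>+ t1. \<integral>\<^sup>+ t2. \<integral>\<^sup>+ s1. \<integral>\<^sup>+ s2. \<Phi> t1 t2 s1 s2 \<partial>lborel \<partial>lborel \<partial>lborel \<partial>lborel)"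
  proof (rule nn_integral_mono)
    fix t1 :: real
    show "\<infinity> * indicator {0<..1/2::real} t1 \<le> (\<integral>\<^sup>+ t2. \<integral>\<^sup>+ s1. \<integral>\<^sup>+ s2. \<Phi> t1 t2 s1 s2 \<partial>lborel \<partial>lborel \<partial>lborel)"
      using stepC[of t1] by (cases "t1 \<in> {0<..1/2}") auto
  qed
  also have "(\<integral>\<^sup>+ t1. \<infinity> * indicator {0<..1/2::real} t1 \<partial>lborel) = \<infinity> * emeasure lborel {0<..1/2::real}"
    by (rule nn_integral_cmult_indicator) simp
  also have "\<dots> = \<infinity>" by (simp add: ennreal_mult_top)
  finally show ?thesis by (simp add: top_unique)
qed


lemma exp_ident:
  fixes p1 p2 t1 t2 s1 s2 :: real
  shows "exp (-((p1+p2)\<^sup>2 * t1)/2) * exp (-(p2\<^sup>2 * (t2-t1))/2) *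
        (exp (-((-p1+(-p2))\<^sup>2 * s1)/2) * exp (-((-p2)\<^sup>2 * (s2-s1))/2))
     = exp (- ((p1+p2)\<^sup>2 * (t1+s1)) / 2 - p2\<^sup>2 * (t2-t1+s2-s1) / 2)"
proof -
  have "exp (-((p1+p2)\<^sup>2 * t1)/2) * exp (-(p2\<^sup>2 * (t2-t1))/2) *
        (exp (-((-p1+(-p2))\<^sup>2 * s1)/2) * exp (-((-p2)\<^sup>2 * (s2-s1))/2))
      = exp (-((p1+p2)\<^sup>2 * t1)/2 + -(p2\<^sup>2 * (t2-t1))/2 + (-((-p1+(-p2))\<^sup>2 * s1)/2 + -((-p2)\<^sup>2 * (s2-s1))/2))"
    by (simp only: exp_add)
  also have "-((p1+p2)\<^sup>2 * t1)/2 + -(p2\<^sup>2 * (t2-t1))/2 + (-((-p1+(-p2))\<^sup>2 * s1)/2 + -((-p2)\<^sup>2 * (s2-s1))/2)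
      = - ((p1+p2)\<^sup>2 * (t1+s1)) / 2 - p2\<^sup>2 * (t2-t1+s2-s1) / 2"
    by (simp add: power2_eq_square field_simps)
  finally show ?thesis .
qed

theorem mainTheorem5:
  fixes M :: "'a measure" and B W :: "real \<Rightarrow> 'a \<Rightarrow> real"
  assumes "std_BM M B" and "std_BM M W"
    and "prob_space.indep_var M (Pi\<^sub>M UNIV (\<lambda>_. borel)) (\<lambda>\<omega> t. B t \<omega>)
                                (Pi\<^sub>M UNIV (\<lambda>_. borel)) (\<lambda>\<omega> s. W s \<omega>)"
  shows "(\<integral>\<^sup>+ t1. \<integral>\<^sup>+ t2. \<integral>\<^sup>+ s1. \<integral>\<^sup>+ s2. \<integral>\<^sup>+ p1. \<integral>\<^sup>+ p2.
           ennreal (1 / (4 * pi\<^sup>2) * Re (complex_of_real (p1\<^sup>2 * p2\<^sup>2) *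
              prob_space.expectation M (\<lambda>\<omega>. exp (\<i> * complex_of_real
                 (p1 * (B t1 \<omega> - W s1 \<omega>) + p2 * (B t2 \<omega> - W s2 \<omega>))))))
           * indicator {0..1} t1 * indicator {0..1} t2 * indicator {0..1} s1 * indicator {0..1} s2
         \<partial>lborel \<partial>lborel \<partial>lborel \<partial>lborel \<partial>lborel \<partial>lborel) = \<infinity>"
proof (rule time_bound[where C = "exp (-5) / (16 * pi\<^sup>2)"])
  show "0 < exp (-5) / (16 * pi\<^sup>2)" by simp
  fix t1 t2 s1 s2 :: real
  assume r: "0 < t1" "t1 \<le> 1/2" "t1 < t2" "t2 \<le> t1 + 1/2" "0 < s1" "s1 \<le> 1/2" "s1 < s2" "s2 \<le> s1 + 1/2"
  define a where "a = t1 + s1"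
  define b where "b = t2 - t1 + s2 - s1"
  have a: "0 \<le> a" "a \<le> 2" using r unfolding a_def by auto
  have b: "0 < b" "b \<le> 1" using r unfolding b_def by auto
  have ind: "indicator {0..1::real} t1 = (1::ennreal)" "indicator {0..1::real} t2 = (1::ennreal)"
    "indicator {0..1::real} s1 = (1::ennreal)" "indicator {0..1::real} s2 = (1::ennreal)"
    using r by auto
  have "ennreal (exp (-5) / (16 * pi\<^sup>2) / (b\<^sup>2 * sqrt b)) \<le> (\<integral>\<^sup>+ p1. \<integral>\<^sup>+ p2.
           ennreal (1 / (4 * pi\<^sup>2) * Re (complex_of_real (p1\<^sup>2 * p2\<^sup>2) *
              prob_space.expectation M (\<lambda>\<omega>. exp (\<i> * complex_of_real
                 (p1 * (B t1 \<omega> - W s1 \<omega>) + p2 * (B t2 \<omega> - W s2 \<omega>))))))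
           * indicator {0..1} t1 * indicator {0..1} t2 * indicator {0..1} s1 * indicator {0..1} s2
         \<partial>lborel \<partial>lborel)"
  proof (rule pbound[OF a b])
    fix p1 p2 :: real
    have "prob_space.expectation M (\<lambda>\<omega>. exp (\<i> * complex_of_real
                 (p1 * (B t1 \<omega> - W s1 \<omega>) + p2 * (B t2 \<omega> - W s2 \<omega>))))
        = complex_of_real (exp (- ((p1+p2)\<^sup>2 * a) / 2 - p2\<^sup>2 * b / 2))"
      unfolding bm_expect[OF assms r(1,3) r(5,7)] exp_ident a_def b_def ..
    then show "ennreal (1 / (4 * pi\<^sup>2) * (p1\<^sup>2 * p2\<^sup>2 * exp (- ((p1+p2)\<^sup>2 * a) / 2 - p2\<^sup>2 * b / 2)))
       \<le> ennreal (1 / (4 * pi\<^sup>2) * Re (complex_of_real (p1\<^sup>2 * p2\<^sup>2) *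
              prob_space.expectation M (\<lambda>\<omega>. exp (\<i> * complex_of_real
                 (p1 * (B t1 \<omega> - W s1 \<omega>) + p2 * (B t2 \<omega> - W s2 \<omega>))))))
           * indicator {0..1} t1 * indicator {0..1} t2 * indicator {0..1} s1 * indicator {0..1} s2"
      by (simp only: ind mult_1_right Re_complex_of_real of_real_mult[symmetric] order_refl)
  qed
  then show "ennreal (exp (-5) / (16 * pi\<^sup>2) / ((t2-t1+s2-s1)\<^sup>2 * sqrt (t2-t1+s2-s1))) \<le> (\<integral>\<^sup>+ p1. \<integral>\<^sup>+ p2.
           ennreal (1 / (4 * pi\<^sup>2) * Re (complex_of_real (p1\<^sup>2 * p2\<^sup>2) *
              prob_space.expectation M (\<lambda>\<omega>. exp (\<i> * complex_of_real
                 (p1 * (B t1 \<omega> - W s1 \<omega>) + p2 * (B t2 \<omega> - W s2 \<omega>))))))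
           * indicator {0..1} t1 * indicator {0..1} t2 * indicator {0..1} s1 * indicator {0..1} s2
         \<partial>lborel \<partial>lborel)"
    unfolding b_def .
qed

end
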